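(* On $\mathcal{P}(\mathbb{R}^{2m},\mathbb{C})\cap\ker(\Delta_x,\Delta_u)$, equipped with the Fischer inner product, the adjoints of the operators $C,A,S_u,S_x$ are $C^\dagger=A$, $A^\dagger=C$, $S_u^\dagger=S_x$, $S_x^\dagger=S_u$; i.e. for all $P,Q\in\mathcal{P}(\mathbb{R}^{2m},\mathbb{C})\cap\ker(\Delta_x,\Delta_u)$: $[CP,Q]_F=[P,AQ]_F$, $[AP,Q]_F=[P,CQ]_F$, $[S_uP,Q]_F=[P,S_xQ]_F$, $[S_xP,Q]_F=[P,S_uQ]_F$.
   Context: Fix an integer $m>4$. For $x,u\in\mathbb{R}^m$ let $\mathcal{P}(\mathbb{R}^{2m},\mathbb{C})$ be the complex polynomials in $(x,u)$ and $\mathcal{P}_{p,q}$ those of bidegree $(p,q)$. The Fischer inner product is $[P,Q]_F=\overline{P}(\partial_x,\partial_u)Q(x,u)\big|_{x=u=0}$, where $\overline{P}(\partial_x,\partial_u)$ is obtained from $P$ by conjugating the coefficients and replacing each $x_j,u_j$ by $\partial_{x_j},\partial_{u_j}$. Write $|x|^2=\sum x_j^2$, $\langle u,x\rangle=\sum u_jx_j$, $\Delta_x=\sum\partial_{x_j}^2$, $\Delta_u=\sum\partial_{u_j}^2$, $\langle\partial_u,\partial_x\rangle=\sum\partial_{u_j}\partial_{x_j}$, $\langle x,\partial_u\rangle=\sum x_j\partial_{u_j}$, $\langle u,\partial_x\rangle=\sum u_j\partial_{x_j}$, $\ker(D_1,\dots,D_r)=\bigcap\ker D_i$. Every $P\in\mathcal{P}_{p,q}$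 is uniquely $\sum_{a,b\ge0}|x|^{2a}|u|^{2b}H'_{p-2a,q-2b}$ with $H'_{p-2a,q-2b}\in\mathcal{P}_{p-2a,q-2b}\cap\ker(\Delta_x,\Delta_u)$; $\pi_{\mathfrak{s}}P:=H'_{p,q}$. On $\ker(\Delta_x,\Delta_u)$: $S_x=\pi_{\mathfrak{s}}\langle x,\partial_u\rangle$, $S_u=\pi_{\mathfrak{s}}\langle u,\partial_x\rangle$, $A=\pi_{\mathfrak{s}}\langle\partial_u,\partial_x\rangle$, $C=\pi_{\mathfrak{s}}\langle u,x\rangle$. *)

theory Defs
  imports Complex_Main "HOL-Library.Poly_Mapping"
begin

text \<open>Variables are indexed by
  the type 'n + 'n: Inl j stands for x_j and Inr j for u_j, where 'n is a finite type
  with m = CARD('n) elements. A monomial is an exponent vector ('n + 'n) =>_0 nat,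
  a polynomial is a finitely supported map from monomials to complex coefficients
  (multiplication = convolution = polynomial multiplication).\<close>

type_synonym 'n mono = "('n + 'n) \<Rightarrow>\<^sub>0 nat"
type_synonym 'n cpoly = "'n mono \<Rightarrow>\<^sub>0 complex"

definition var :: "('n + 'n) \<Rightarrow> 'n cpoly" where
  "var v = Poly_Mapping.single (Poly_Mapping.single v 1) 1"

definition pder :: "('n + 'n) \<Rightarrow> 'n cpoly \<Rightarrow> 'n cpoly" where
  "pder v P = (\<Sum>\<alpha>\<in>Poly_Mapping.keys P. Poly_Mapping.single (\<alpha> - Poly_Mapping.single v (1::nat))
                 (Poly_Mapping.lookup P \<alpha> * of_nat (Poly_Mapping.lookup \<alpha> v)))"

text \<open>The differential operator \<partial>^\<alpha> = \<Prod>_v \<partial>_v^{\<alpha>_v} (the partial derivatives commute).\<close>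
definition dmono :: "'n mono \<Rightarrow> 'n cpoly \<Rightarrow> 'n cpoly" where
  "dmono \<alpha> = Finite_Set.fold (\<lambda>v f. (pder v ^^ Poly_Mapping.lookup \<alpha> v) \<circ> f) id (UNIV :: ('n + 'n) set)"

text \<open>Fischer inner product [P,Q]_F = conj(P)(\<partial>_x,\<partial>_u) Q evaluated at x = u = 0
  (evaluation at 0 = constant coefficient).\<close>
definition fischer :: "'n::finite cpoly \<Rightarrow> 'n cpoly \<Rightarrow> complex" where
  "fischer P Q = (\<Sum>\<alpha>\<in>Poly_Mapping.keys P. cnj (Poly_Mapping.lookup P \<alpha>) * Poly_Mapping.lookup (dmono \<alpha> Q) 0)"

definition lap_x :: "'n::finite cpoly \<Rightarrow> 'n cpoly" where
  "lap_x P = (\<Sum>j\<in>UNIV. pder (Inl j) (pder (Inl j) P))"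

definition lap_u :: "'n::finite cpoly \<Rightarrow> 'n cpoly" where
  "lap_u P = (\<Sum>j\<in>UNIV. pder (Inr j) (pder (Inr j) P))"

definition harmonic2 :: "'n::finite cpoly \<Rightarrow> bool" where
  "harmonic2 P \<longleftrightarrow> lap_x P = 0 \<and> lap_u P = 0"

definition normx2 :: "'n::finite cpoly" where
  "normx2 = (\<Sum>j\<in>UNIV. var (Inl j) ^ 2)"

definition normu2 :: "'n::finite cpoly" where
  "normu2 = (\<Sum>j\<in>UNIV. var (Inr j) ^ 2)"

definition xdeg :: "'n::finite mono \<Rightarrow> nat" where
  "xdeg \<alpha> = (\<Sum>j\<in>UNIV. Poly_Mapping.lookup \<alpha> (Inl j))"

definition udeg :: "'n::finite mono \<Rightarrow> nat" where
  "udeg \<alpha> = (\<Sum>j\<in>UNIV. Poly_Mapping.lookup \<alpha> (Inr j))"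

definition bihom :: "nat \<Rightarrow> nat \<Rightarrow> 'n::finite cpoly \<Rightarrow> bool" where
  "bihom p q P \<longleftrightarrow> (\<forall>\<alpha>\<in>Poly_Mapping.keys P. xdeg \<alpha> = p \<and> udeg \<alpha> = q)"

definition bicomp :: "nat \<Rightarrow> nat \<Rightarrow> 'n::finite cpoly \<Rightarrow> 'n cpoly" where
  "bicomp p q P = (\<Sum>\<alpha>\<in>{\<alpha>\<in>Poly_Mapping.keys P. xdeg \<alpha> = p \<and> udeg \<alpha> = q}. Poly_Mapping.single \<alpha> (Poly_Mapping.lookup P \<alpha>))"

text \<open>For P \<in> \<P>_{p,q}: P = \<Sum>_{a,b} |x|^{2a}|u|^{2b} H'_{p-2a,q-2b} uniquely, with
  H' harmonic and bihomogeneous; \<pi>_s P = H'_{p,q}.\<close>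
definition pis_hom :: "nat \<Rightarrow> nat \<Rightarrow> 'n::finite cpoly \<Rightarrow> 'n cpoly" where
  "pis_hom p q P = (THE H. \<exists>Hf :: nat \<Rightarrow> nat \<Rightarrow> 'n cpoly.
      (\<forall>a\<le>p div 2. \<forall>b\<le>q div 2. bihom (p - 2*a) (q - 2*b) (Hf a b) \<and> harmonic2 (Hf a b)) \<and>
      P = (\<Sum>a\<le>p div 2. \<Sum>b\<le>q div 2. normx2 ^ a * normu2 ^ b * Hf a b) \<and>
      H = Hf 0 0)"

definition pis :: "'n::finite cpoly \<Rightarrow> 'n cpoly" where
  "pis P = (\<Sum>(p,q)\<in>(\<lambda>\<alpha>. (xdeg \<alpha>, udeg \<alpha>)) ` Poly_Mapping.keys P. pis_hom p q (bicomp p q P))"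

definition S_x :: "'n::finite cpoly \<Rightarrow> 'n cpoly" where
  "S_x P = pis (\<Sum>j\<in>UNIV. var (Inl j) * pder (Inr j) P)"

definition S_u :: "'n::finite cpoly \<Rightarrow> 'n cpoly" where
  "S_u P = pis (\<Sum>j\<in>UNIV. var (Inr j) * pder (Inl j) P)"

definition A_op :: "'n::finite cpoly \<Rightarrow> 'n cpoly" where
  "A_op P = pis (\<Sum>j\<in>UNIV. pder (Inr j) (pder (Inl j) P))"

definition C_op :: "'n::finite cpoly \<Rightarrow> 'n cpoly" where
  "C_op P = pis ((\<Sum>j\<in>UNIV. var (Inr j) * var (Inl j)) * P)"

end

theory Submission
  imports Defs "HOL-Library.FuncSet"
begin


abbreviation lk where "lk \<equiv> Poly_Mapping.lookup"
abbreviation ks where "ks \<equiv> Poly_Mapping.keys"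
abbreviation ev :: "'a \<Rightarrow> 'a \<Rightarrow>\<^sub>0 nat" where "ev v \<equiv> Poly_Mapping.single v 1"

lemma pm_expand: "p = (\<Sum>g\<in>ks p. Poly_Mapping.single g (lk p g))"
proof (rule poly_mapping_eqI)
  fix k
  have "lk (\<Sum>g\<in>ks p. Poly_Mapping.single g (lk p g)) k = (\<Sum>g\<in>ks p. if g = k then lk p g else 0)"
    by (simp add: lookup_sum lookup_single when_def)
  also have "\<dots> = lk p k" by (simp add: in_keys_iff)
  finally show "lk p k = lk (\<Sum>g\<in>ks p. Poly_Mapping.single g (lk p g)) k" by simp
qed

lemma lookup_single_mult:
  "lk (Poly_Mapping.single k c * p) b = (\<Sum>g\<in>ks p. if k + g = b then c * lk p g else 0)"
proof -
  have "Poly_Mapping.single k c * p = (\<Sum>g\<in>ks p. Poly_Mapping.single (k + g) (c * lk p g))"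
    by (subst pm_expand[of p]) (simp add: sum_distrib_left mult_single)
  then show ?thesis by (simp add: lookup_sum lookup_single when_def)
qed

lemma lookup_single_mult_shift:
  fixes k g :: "'a \<Rightarrow>\<^sub>0 nat" and p :: "('a \<Rightarrow>\<^sub>0 nat) \<Rightarrow>\<^sub>0 'b::comm_semiring_1"
  shows "lk (Poly_Mapping.single k c * p) (k + g) = c * lk p g"
proof -
  have "(\<Sum>h\<in>ks p. if k + h = k + g then c * lk p h else 0) = (\<Sum>h\<in>ks p. if h = g then c * lk p h else 0)"
    by simp
  also have "\<dots> = c * lk p g" by (simp add: in_keys_iff)
  finally show ?thesis by (simp add: lookup_single_mult)
qed

lemma keys_single_mult:
  fixes k :: "'a \<Rightarrow>\<^sub>0 nat" and p :: "('a \<Rightarrow>\<^sub>0 nat) \<Rightarrow>\<^sub>0 'b::comm_semiring_1"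
  shows "ks (Poly_Mapping.single k c * p) \<subseteq> (\<lambda>g. k + g) ` ks p"
proof
  fix b assume "b \<in> ks (Poly_Mapping.single k c * p)"
  then have "(\<Sum>g\<in>ks p. if k + g = b then c * lk p g else 0) \<noteq> 0"
    by (simp add: lookup_single_mult in_keys_iff)
  have "\<exists>g\<in>ks p. (if k + g = b then c * lk p g else 0) \<noteq> 0"
  proof (rule ccontr)
    assume "\<not> ?thesis"
    then have "(\<Sum>g\<in>ks p. if k + g = b then c * lk p g else 0) = 0" by (intro sum.neutral) blast
    then show False using \<open>(\<Sum>g\<in>ks p. if k + g = b then c * lk p g else 0) \<noteq> 0\<close> by simp
  qed
  then obtain g where "g \<in> ks p" "k + g = b" by (metis (full_types))
  then show "b \<in> (\<lambda>g. k + g) ` ks p" by blast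
qed

lemma lookup_pder:
  "lk (pder v P) b = lk P (b + ev v) * of_nat (lk b v + 1)"
proof -
  have "lk (pder v P) b = (\<Sum>a\<in>ks P. if a - ev v = b then lk P a * of_nat (lk a v) else 0)"
    by (simp add: pder_def lookup_sum lookup_single when_def)
  also have "\<dots> = (\<Sum>a\<in>ks P. if a = b + ev v then lk P a * of_nat (lk a v) else 0)"
  proof (rule sum.cong[OF refl])
    fix a
    show "(if a - ev v = b then lk P a * of_nat (lk a v) else 0) =
          (if a = b + ev v then lk P a * of_nat (lk a v) else 0)"
    proof (cases "lk a v = 0")
      case True
      have "lk (b + ev v) v \<noteq> 0" by (simp add: lookup_add)
      then have "a \<noteq> b + ev v" using True by auto
      then show ?thesis using True by simp
    next
      case False
      have "(a - ev v = b) = (a = b + ev v)"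
      proof
        assume "a - ev v = b"
        show "a = b + ev v"
        proof (rule poly_mapping_eqI)
          fix w
          have "lk b w = lk a w - lk (ev v) w" using \<open>a - ev v = b\<close> by (auto simp: lookup_minus)
          then show "lk a w = lk (b + ev v) w" using False by (cases "w = v") (auto simp: lookup_add lookup_single)
        qed
      next
        assume "a = b + ev v" then show "a - ev v = b"
          by (intro poly_mapping_eqI) (simp add: lookup_add lookup_minus)
      qed
      then show ?thesis by simp
    qed
  qed
  also have "\<dots> = lk P (b + ev v) * of_nat (lk b v + 1)"
    by (simp add: in_keys_iff lookup_add)
  finally show ?thesis .
qed



lemma lookup_pder_pow:
  "lk ((pder v ^^ k) P) b = lk P (b + Poly_Mapping.single v k) * of_nat (\<Prod>i<k. lk b v + Suc i)"
proof (induction k arbitrary: b)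
  case 0
  then show ?case by simp
next
  case (Suc k)
  have e: "b + ev v + Poly_Mapping.single v k = b + Poly_Mapping.single v (Suc k)"
    by (simp add: single_add[symmetric] add.assoc)
  have p: "(\<Prod>i<Suc k. lk b v + Suc i) = (\<Prod>i<k. lk (b + ev v) v + Suc i) * (lk b v + 1)"
    unfolding prod.lessThan_Suc_shift by (simp add: lookup_add mult.commute del: prod.lessThan_Suc)
  have "lk ((pder v ^^ Suc k) P) b = lk ((pder v ^^ k) P) (b + ev v) * of_nat (lk b v + 1)"
    by (simp add: lookup_pder)
  also have "\<dots> = lk P (b + ev v + Poly_Mapping.single v k) * of_nat (\<Prod>i<k. lk (b + ev v) v + Suc i) * of_nat (lk b v + 1)"
    by (simp only: Suc)
  also have "\<dots> = lk P (b + Poly_Mapping.single v (Suc k)) * of_nat (\<Prod>i<Suc k. lk b v + Suc i)"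
    by (simp only: e p of_nat_mult mult.assoc)
  finally show ?case .
qed

lemma pder_pow_commute:
  "(pder v ^^ a) ((pder w ^^ c) P) = (pder w ^^ c) ((pder v ^^ a) P)"
proof (cases "v = w")
  case True
  then show ?thesis by (metis add.commute funpow_add o_apply)
next
  case False
  show ?thesis
  proof (rule poly_mapping_eqI)
    fix b
    have 1: "lk (b + Poly_Mapping.single v a) w = lk b w" using False by (simp add: lookup_add lookup_single)
    have 2: "lk (b + Poly_Mapping.single w c) v = lk b v" using False by (simp add: lookup_add lookup_single)
    show "lk ((pder v ^^ a) ((pder w ^^ c) P)) b = lk ((pder w ^^ c) ((pder v ^^ a) P)) b"
      by (simp add: lookup_pder_pow 1 2 ac_simps)
  qed
qed

definition dstep :: "'n mono \<Rightarrow> ('n + 'n) \<Rightarrow> ('n cpoly \<Rightarrow> 'n cpoly) \<Rightarrow> ('n cpoly \<Rightarrow> 'n cpoly)" where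
  "dstep \<alpha> = (\<lambda>v f. (pder v ^^ lk \<alpha> v) \<circ> f)"

lemma dstep_cfc: "comp_fun_commute (dstep \<alpha>)"
  by unfold_locales (auto simp: dstep_def fun_eq_iff pder_pow_commute)

lemma lookup_fold_dstep:
  assumes "finite A"
  shows "lk (Finite_Set.fold (dstep \<alpha>) id A P) b =
    lk P (b + (\<Sum>v\<in>A. Poly_Mapping.single v (lk \<alpha> v))) * of_nat (\<Prod>v\<in>A. \<Prod>i<lk \<alpha> v. lk b v + Suc i)"
  using assms
proof (induction A arbitrary: b rule: finite_induct)
  case empty
  then show ?case by simp
next
  case (insert x A)
  have f: "Finite_Set.fold (dstep \<alpha>) id (insert x A) = dstep \<alpha> x (Finite_Set.fold (dstep \<alpha>) id A)"
    using comp_fun_commute_on.fold_insert[OF dstep_cfc[unfolded comp_fun_commute_def'], of x A] insert by blast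
  have pr: "(\<Prod>v\<in>A. \<Prod>i<lk \<alpha> v. lk (b + Poly_Mapping.single x (lk \<alpha> x)) v + Suc i)
     = (\<Prod>v\<in>A. \<Prod>i<lk \<alpha> v. lk b v + Suc i)"
  proof (rule prod.cong[OF refl])
    fix v assume "v \<in> A"
    then have "v \<noteq> x" using insert by auto
    then show "(\<Prod>i<lk \<alpha> v. lk (b + Poly_Mapping.single x (lk \<alpha> x)) v + Suc i) = (\<Prod>i<lk \<alpha> v. lk b v + Suc i)"
      by (simp add: lookup_add lookup_single)
  qed
  let ?F = "Finite_Set.fold (dstep \<alpha>) id"
  let ?sx = "Poly_Mapping.single x (lk \<alpha> x)"
  have "lk (?F (insert x A) P) b = lk ((pder x ^^ lk \<alpha> x) (?F A P)) b" by (simp only: f) (simp add: dstep_def)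
  also have "\<dots> = lk (?F A P) (b + ?sx) * of_nat (\<Prod>i<lk \<alpha> x. lk b x + Suc i)" by (rule lookup_pder_pow)
  also have "\<dots> = lk P (b + ?sx + (\<Sum>v\<in>A. Poly_Mapping.single v (lk \<alpha> v))) *
       of_nat (\<Prod>v\<in>A. \<Prod>i<lk \<alpha> v. lk (b + ?sx) v + Suc i) * of_nat (\<Prod>i<lk \<alpha> x. lk b x + Suc i)"
    by (simp only: insert.IH)
  also have "\<dots> = lk P (b + (\<Sum>v\<in>insert x A. Poly_Mapping.single v (lk \<alpha> v))) *
       of_nat (\<Prod>v\<in>insert x A. \<Prod>i<lk \<alpha> v. lk b v + Suc i)"
    by (simp only: pr sum.insert[OF insert.hyps] prod.insert[OF insert.hyps] add.assoc of_nat_mult mult.assoc) (simp only: mult.commute)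
  finally show ?case .
qed

lemma sum_single_lookup: "(\<Sum>v\<in>(UNIV::'a::finite set). Poly_Mapping.single v (lk \<alpha> v)) = \<alpha>"
  by (rule poly_mapping_eqI) (simp add: lookup_sum lookup_single when_def)

definition mfact :: "'n::finite mono \<Rightarrow> nat" where
  "mfact \<alpha> = (\<Prod>v\<in>UNIV. fact (lk \<alpha> v))"

lemma prod_Suc_fact: "(\<Prod>i<n. (0::nat) + Suc i) = fact n"
  by (simp add: fact_prod_Suc atLeast0LessThan)

lemma dmono_at0: "lk (dmono \<alpha> Q) 0 = lk Q \<alpha> * of_nat (mfact (\<alpha>::'n::finite mono))"
proof -
  have "dmono \<alpha> = Finite_Set.fold (dstep \<alpha>) id UNIV"
    by (simp add: dmono_def dstep_def)
  moreover have "(\<Prod>v\<in>UNIV. \<Prod>i<lk \<alpha> v. lk (0::'n mono) v + Suc i) = mfact \<alpha>"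
    unfolding mfact_def lookup_zero prod_Suc_fact ..
  ultimately show ?thesis
    by (simp only: lookup_fold_dstep[OF finite_UNIV] sum_single_lookup add_0_left)
qed

lemma fischer_eq: "fischer P Q = (\<Sum>a\<in>ks P. cnj (lk P a) * lk Q a * of_nat (mfact a))"
  by (simp add: fischer_def dmono_at0 mult.assoc)

lemma fischer_eq_gen:
  assumes "finite S" "ks P \<subseteq> S"
  shows "fischer P Q = (\<Sum>a\<in>S. cnj (lk P a) * lk Q a * of_nat (mfact a))"
  unfolding fischer_eq
  by (rule sum.mono_neutral_left) (use assms in \<open>auto simp: in_keys_iff\<close>)



definition sm :: "complex \<Rightarrow> 'n cpoly \<Rightarrow> 'n cpoly" where
  "sm c P = Poly_Mapping.single 0 c * P"

lemma lookup_sm [simp]: "lk (sm c P) a = c * lk P a"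
  using lookup_single_mult_shift[of 0 c P a] by (simp add: sm_def)

lemma fischer_add_right: "fischer P (Q1 + Q2) = fischer P Q1 + fischer P Q2"
  by (simp add: fischer_eq lookup_add algebra_simps sum.distrib)

lemma fischer_sm_right: "fischer P (sm c Q) = c * fischer P Q"
  by (simp add: fischer_eq sum_distrib_left algebra_simps)

lemma fischer_minus_right: "fischer P (Q1 - Q2) = fischer P Q1 - fischer P Q2"
  by (simp add: fischer_eq lookup_minus algebra_simps sum_subtractf)

lemma fischer_zero_right [simp]: "fischer P 0 = 0"
  by (simp add: fischer_eq)

lemma fischer_zero_left [simp]: "fischer 0 Q = 0"
  by (simp add: fischer_eq)

lemma fischer_add_left: "fischer (P1 + P2) Q = fischer P1 Q + fischer P2 Q"
proof -
  let ?S = "ks P1 \<union> ks P2"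
  have "ks (P1 + P2) \<subseteq> ?S" by (rule keys_add)
  then show ?thesis
    by (simp add: fischer_eq_gen[of ?S] lookup_add algebra_simps sum.distrib)
qed

lemma fischer_cnj: "fischer P Q = cnj (fischer Q P)"
proof -
  let ?S = "ks P \<union> ks Q"
  show ?thesis
    by (simp add: fischer_eq_gen[of ?S] algebra_simps)
qed

lemma fischer_sm_left: "fischer (sm c P) Q = cnj c * fischer P Q"
  by (subst fischer_cnj, subst (2) fischer_cnj) (simp add: fischer_sm_right)

lemma fischer_minus_left: "fischer (P1 - P2) Q = fischer P1 Q - fischer P2 Q"
  by (subst fischer_cnj, subst (2) fischer_cnj, subst (3) fischer_cnj) (simp add: fischer_minus_right)

lemma fischer_uminus_left: "fischer (- P) Q = - fischer P Q"
  using fischer_minus_left[of 0 P Q] by simp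

lemma fischer_sum_left: "fischer (\<Sum>i\<in>I. P i) Q = (\<Sum>i\<in>I. fischer (P i) Q)"
  by (induction I rule: infinite_finite_induct) (auto simp: fischer_add_left)

lemma fischer_sum_right: "fischer Q (\<Sum>i\<in>I. P i) = (\<Sum>i\<in>I. fischer Q (P i))"
  by (induction I rule: infinite_finite_induct) (auto simp: fischer_add_right)

lemma fischer_single: "fischer (Poly_Mapping.single a 1) Q = lk Q a * of_nat (mfact a)"
  by (simp add: fischer_eq)

lemma fischer_self_zero:
  assumes "fischer P P = 0" shows "P = 0"
proof (rule ccontr)
  assume "P \<noteq> 0"
  then obtain a where a: "a \<in> ks P" by (metis keys_eq_empty all_not_in_conv)
  have "fischer P P = of_real (\<Sum>b\<in>ks P. (cmod (lk P b))\<^sup>2 * real (mfact b))"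
    unfolding fischer_eq of_real_sum
  proof (rule sum.cong[OF refl])
    fix b
    have "cnj z * z = of_real ((cmod z)\<^sup>2)" for z using complex_norm_square[of z] by (simp add: mult.commute)
    then show "cnj (lk P b) * lk P b * of_nat (mfact b) = complex_of_real ((cmod (lk P b))\<^sup>2 * real (mfact b))"
      by (simp only: of_real_mult of_real_of_nat_eq)
  qed
  then have s0: "(\<Sum>b\<in>ks P. (cmod (lk P b))\<^sup>2 * real (mfact b)) = 0" using assms by (metis of_real_eq_0_iff)
  have nn: "\<And>b. b\<in>ks P \<Longrightarrow> 0 \<le> (cmod (lk P b))\<^sup>2 * real (mfact b)" by simp
  have "(\<Sum>b\<in>ks P. (cmod (lk P b))\<^sup>2 * real (mfact b)) = 0 \<longleftrightarrow> (\<forall>b\<in>ks P. (cmod (lk P b))\<^sup>2 * real (mfact b) = 0)"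
    by (rule sum_nonneg_eq_0_iff) (simp_all only: finite_keys nn)
  then have "\<forall>b\<in>ks P. (cmod (lk P b))\<^sup>2 * real (mfact b) = 0" using s0 by blast
  then have t0: "(cmod (lk P a))\<^sup>2 * real (mfact a) = 0" using a by simp
  have "mfact a \<noteq> 0" by (simp add: mfact_def)
  then have "lk P a = 0" using t0 by simp
  then show False using a by (simp add: in_keys_iff)
qed

lemma var_eq: "var v = Poly_Mapping.single (ev v) 1"
  by (simp add: var_def)

lemma mfact_shift: "mfact (ev v + g) = (lk g v + 1) * mfact (g::'n::finite mono)"
proof -
  have "\<And>w. fact (lk (ev v + g) w) = (if w = v then lk g v + 1 else 1) * (fact (lk g w) :: nat)"
    by (simp add: lookup_add lookup_single when_def)
  then have "mfact (ev v + g) = (\<Prod>w\<in>UNIV. (if w = v then lk g v + 1 else 1)) * mfact g"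
    by (simp add: mfact_def prod.distrib)
  then show ?thesis by simp
qed

lemma fischer_var_adj: "fischer (var v * P) Q = fischer P (pder v (Q::'n::finite cpoly))"
proof -
  let ?S = "(\<lambda>g. ev v + g) ` ks P"
  have sub: "ks (var v * P) \<subseteq> ?S" unfolding var_eq by (rule keys_single_mult)
  have inj: "inj_on (\<lambda>g. ev v + g) (ks P)" by (rule inj_onI) simp
  have "fischer (var v * P) Q = (\<Sum>a\<in>?S. cnj (lk (var v * P) a) * lk Q a * of_nat (mfact a))"
    by (rule fischer_eq_gen[OF _ sub]) simp
  also have "\<dots> = (\<Sum>g\<in>ks P. cnj (lk (var v * P) (ev v + g)) * lk Q (ev v + g) * of_nat (mfact (ev v + g)))"
    by (rule sum.reindex[OF inj, unfolded comp_def])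
  also have "\<dots> = (\<Sum>g\<in>ks P. cnj (lk P g) * lk (pder v Q) g * of_nat (mfact g))"
  proof (rule sum.cong[OF refl])
    fix g
    have 1: "lk (var v * P) (ev v + g) = lk P g" unfolding var_eq
      using lookup_single_mult_shift[of "ev v" 1 P g] by simp
    have 2: "lk (pder v Q) g = lk Q (ev v + g) * of_nat (lk g v + 1)"
      using lookup_pder[of v Q g] by (simp only: add.commute)
    show "cnj (lk (var v * P) (ev v + g)) * lk Q (ev v + g) * of_nat (mfact (ev v + g)) =
          cnj (lk P g) * lk (pder v Q) g * of_nat (mfact g)"
      by (simp only: 1 2 mfact_shift of_nat_mult) (simp only: mult_ac)
  qed
  also have "\<dots> = fischer P (pder v Q)" by (simp add: fischer_eq)
  finally show ?thesis .
qed



lemma pder_add: "pder v (X + Y) = pder v X + pder v Y"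
  by (rule poly_mapping_eqI) (simp add: lookup_pder lookup_add algebra_simps)
lemma pder_minus: "pder v (X - Y) = pder v X - pder v Y"
  by (rule poly_mapping_eqI) (simp add: lookup_pder lookup_minus algebra_simps)
lemma pder_zero [simp]: "pder v 0 = 0"
  by (rule poly_mapping_eqI) (simp add: lookup_pder)
lemma pder_sm: "pder v (sm c X) = sm c (pder v X)"
  by (rule poly_mapping_eqI) (simp add: lookup_pder)
lemma pder_sum: "pder v (\<Sum>i\<in>I. X i) = (\<Sum>i\<in>I. pder v (X i))"
  by (induction I rule: infinite_finite_induct) (auto simp: pder_add)

lemma lap_x_add: "lap_x (X + Y) = lap_x X + lap_x Y"
  by (simp add: lap_x_def pder_add sum.distrib)
lemma lap_u_add: "lap_u (X + Y) = lap_u X + lap_u Y"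
  by (simp add: lap_u_def pder_add sum.distrib)
lemma lap_x_minus: "lap_x (X - Y) = lap_x X - lap_x Y"
  by (simp add: lap_x_def pder_minus sum_subtractf)
lemma lap_u_minus: "lap_u (X - Y) = lap_u X - lap_u Y"
  by (simp add: lap_u_def pder_minus sum_subtractf)
lemma lap_x_zero [simp]: "lap_x 0 = 0" by (simp add: lap_x_def)
lemma lap_u_zero [simp]: "lap_u 0 = 0" by (simp add: lap_u_def)

lemma harmonic2_add: "harmonic2 X \<Longrightarrow> harmonic2 Y \<Longrightarrow> harmonic2 (X + Y)"
  by (simp add: harmonic2_def lap_x_add lap_u_add)
lemma harmonic2_minus: "harmonic2 X \<Longrightarrow> harmonic2 Y \<Longrightarrow> harmonic2 (X - Y)"
  by (simp add: harmonic2_def lap_x_minus lap_u_minus)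
lemma harmonic2_zero [simp]: "harmonic2 0"
  by (simp add: harmonic2_def)

lemma normx2_mult: "normx2 * S = (\<Sum>j\<in>UNIV. var (Inl j) * (var (Inl j) * S))"
  by (simp add: normx2_def sum_distrib_right power2_eq_square mult.assoc)
lemma normu2_mult: "normu2 * S = (\<Sum>j\<in>UNIV. var (Inr j) * (var (Inr j) * S))"
  by (simp add: normu2_def sum_distrib_right power2_eq_square mult.assoc)

lemma fischer_normx2: "fischer (normx2 * S) H = fischer S (lap_x H)"
  by (simp add: normx2_mult fischer_sum_left fischer_var_adj lap_x_def fischer_sum_right)
lemma fischer_normu2: "fischer (normu2 * S) H = fischer S (lap_u H)"
  by (simp add: normu2_mult fischer_sum_left fischer_var_adj lap_u_def fischer_sum_right)

lemma fischer_orth: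
  assumes "harmonic2 Q" "a > 0 \<or> b > 0"
  shows "fischer (normx2 ^ a * normu2 ^ b * X) Q = 0"
proof (cases "a > 0")
  case True
  then have "normx2 ^ a * normu2 ^ b * X = normx2 * (normx2 ^ (a - 1) * normu2 ^ b * X)"
    by (cases a) (simp_all add: mult.assoc)
  then show ?thesis using assms by (simp add: fischer_normx2 harmonic2_def)
next
  case False
  then have "b > 0" using assms by simp
  then have "normx2 ^ a * normu2 ^ b * X = normu2 * (normx2 ^ a * normu2 ^ (b - 1) * X)"
    by (cases b) (simp_all add: mult_ac)
  then show ?thesis using assms by (simp add: fischer_normu2 harmonic2_def)
qed

lemma decomp_fischer:
  assumes "harmonic2 Q"
  shows "fischer (\<Sum>a\<le>A. \<Sum>b\<le>B. normx2 ^ a * normu2 ^ b * Hf a b) Q = fischer (Hf 0 0) Q"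
proof -
  have "fischer (\<Sum>a\<le>A. \<Sum>b\<le>B. normx2 ^ a * normu2 ^ b * Hf a b) Q
     = (\<Sum>a\<le>A. \<Sum>b\<le>B. fischer (normx2 ^ a * normu2 ^ b * Hf a b) Q)"
    by (simp add: fischer_sum_left)
  also have "\<dots> = (\<Sum>a\<le>A. \<Sum>b\<le>B. if a = 0 \<and> b = 0 then fischer (Hf 0 0) Q else 0)"
    by (intro sum.cong refl) (auto simp: fischer_orth[OF assms])
  also have "\<dots> = (\<Sum>a\<le>A. if a = 0 then fischer (Hf 0 0) Q else 0)"
    by (intro sum.cong refl) (simp add: sum.delta')
  also have "\<dots> = fischer (Hf 0 0) Q"
    by (simp add: sum.delta')
  finally show ?thesis .
qed

definition decomp :: "nat \<Rightarrow> nat \<Rightarrow> 'n::finite cpoly \<Rightarrow> (nat \<Rightarrow> nat \<Rightarrow> 'n cpoly) \<Rightarrow> bool" where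
  "decomp p q P Hf \<longleftrightarrow> (\<forall>a\<le>p div 2. \<forall>b\<le>q div 2. bihom (p - 2*a) (q - 2*b) (Hf a b) \<and> harmonic2 (Hf a b)) \<and>
      P = (\<Sum>a\<le>p div 2. \<Sum>b\<le>q div 2. normx2 ^ a * normu2 ^ b * Hf a b)"



lemma xdeg_add: "xdeg (a + b) = xdeg a + xdeg b"
  by (simp add: xdeg_def lookup_add sum.distrib)
lemma udeg_add: "udeg (a + b) = udeg a + udeg b"
  by (simp add: udeg_def lookup_add sum.distrib)
lemma xdeg_evl [simp]: "xdeg (ev (Inl j) :: 'n::finite mono) = 1"
  by (simp add: xdeg_def lookup_single when_def)
lemma udeg_evl [simp]: "udeg (ev (Inl j) :: 'n::finite mono) = 0"
  by (simp add: udeg_def lookup_single when_def)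
lemma xdeg_evr [simp]: "xdeg (ev (Inr j) :: 'n::finite mono) = 0"
  by (simp add: xdeg_def lookup_single when_def)
lemma udeg_evr [simp]: "udeg (ev (Inr j) :: 'n::finite mono) = 1"
  by (simp add: udeg_def lookup_single when_def)


lemma xdeg_evl' [simp]: "xdeg (Poly_Mapping.single (Inl j) (Suc 0) :: 'n::finite mono) = 1"
  by (simp add: xdeg_def lookup_single when_def)
lemma udeg_evl' [simp]: "udeg (Poly_Mapping.single (Inl j) (Suc 0) :: 'n::finite mono) = 0"
  by (simp add: udeg_def lookup_single when_def)
lemma xdeg_evr' [simp]: "xdeg (Poly_Mapping.single (Inr j) (Suc 0) :: 'n::finite mono) = 0"
  by (simp add: xdeg_def lookup_single when_def)
lemma udeg_evr' [simp]: "udeg (Poly_Mapping.single (Inr j) (Suc 0) :: 'n::finite mono) = 1"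
  by (simp add: udeg_def lookup_single when_def)

lemma keys_sm: "ks (sm c X) \<subseteq> ks X"
  by (auto simp: in_keys_iff)

lemma keys_var_mult: "a \<in> ks (var v * X) \<Longrightarrow> \<exists>b\<in>ks X. a = ev v + b"
  using keys_single_mult[of "ev v" 1 X] unfolding var_eq by blast

lemma keys_normx2:
  assumes "a \<in> ks (normx2 * X)"
  shows "\<exists>b\<in>ks X. xdeg a = xdeg b + 2 \<and> udeg a = udeg (b::'n::finite mono)"
proof -
  have "a \<in> ks (\<Sum>j\<in>UNIV. var (Inl j) * (var (Inl j) * X))"
    using assms by (simp only: normx2_mult)
  then have "a \<in> (\<Union>j\<in>UNIV. ks (var (Inl j) * (var (Inl j) * X)))"
    by (rule subsetD[OF keys_sum])
  then obtain j where "a \<in> ks (var (Inl j) * (var (Inl j) * X))" by blast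
  then obtain c where c: "c \<in> ks (var (Inl j) * X)" "a = ev (Inl j) + c" using keys_var_mult by blast
  then obtain b where b: "b \<in> ks X" "c = ev (Inl j) + b" using keys_var_mult by blast
  have "xdeg a = xdeg b + 2" "udeg a = udeg b + 0" using c(2) b(2) by (simp_all add: xdeg_add udeg_add)
  then show ?thesis using b(1) by auto
qed

lemma keys_normu2:
  assumes "a \<in> ks (normu2 * X)"
  shows "\<exists>b\<in>ks X. xdeg a = xdeg b \<and> udeg a = udeg (b::'n::finite mono) + 2"
proof -
  have "a \<in> ks (\<Sum>j\<in>UNIV. var (Inr j) * (var (Inr j) * X))"
    using assms by (simp only: normu2_mult)
  then have "a \<in> (\<Union>j\<in>UNIV. ks (var (Inr j) * (var (Inr j) * X)))"
    by (rule subsetD[OF keys_sum])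
  then obtain j where "a \<in> ks (var (Inr j) * (var (Inr j) * X))" by blast
  then obtain c where c: "c \<in> ks (var (Inr j) * X)" "a = ev (Inr j) + c" using keys_var_mult by blast
  then obtain b where b: "b \<in> ks X" "c = ev (Inr j) + b" using keys_var_mult by blast
  have "xdeg a = xdeg b + 0" "udeg a = udeg b + 2" using c(2) b(2) by (simp_all add: xdeg_add udeg_add)
  then show ?thesis using b(1) by auto
qed

lemma keys_pder: "a \<in> ks (pder v X) \<Longrightarrow> a + ev v \<in> ks X"
  by (auto simp: in_keys_iff lookup_pder)

lemma keys_lap_x:
  assumes "a \<in> ks (lap_x X)"
  shows "\<exists>b\<in>ks X. xdeg b = xdeg a + 2 \<and> udeg b = udeg (a::'n::finite mono)"
proof -
  have "a \<in> ks (\<Sum>j\<in>UNIV. pder (Inl j) (pder (Inl j) X))"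
    using assms by (simp only: lap_x_def)
  then have "a \<in> (\<Union>j\<in>UNIV. ks (pder (Inl j) (pder (Inl j) X)))"
    by (rule subsetD[OF keys_sum])
  then obtain j where "a \<in> ks (pder (Inl j) (pder (Inl j) X))" by blast
  then have m: "a + ev (Inl j) + ev (Inl j) \<in> ks X" by (intro keys_pder)
  let ?b = "a + ev (Inl j) + ev (Inl j)"
  have "xdeg ?b = xdeg a + 2" "udeg ?b = udeg a + 0" by (simp_all add: xdeg_add udeg_add)
  then show ?thesis using m by auto
qed

lemma keys_lap_u:
  assumes "a \<in> ks (lap_u X)"
  shows "\<exists>b\<in>ks X. xdeg b = xdeg a \<and> udeg b = udeg (a::'n::finite mono) + 2"
proof -
  have "a \<in> ks (\<Sum>j\<in>UNIV. pder (Inr j) (pder (Inr j) X))"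
    using assms by (simp only: lap_u_def)
  then have "a \<in> (\<Union>j\<in>UNIV. ks (pder (Inr j) (pder (Inr j) X)))"
    by (rule subsetD[OF keys_sum])
  then obtain j where "a \<in> ks (pder (Inr j) (pder (Inr j) X))" by blast
  then have m: "a + ev (Inr j) + ev (Inr j) \<in> ks X" by (intro keys_pder)
  let ?b = "a + ev (Inr j) + ev (Inr j)"
  have "xdeg ?b = xdeg a + 0" "udeg ?b = udeg a + 2" by (simp_all add: xdeg_add udeg_add)
  then show ?thesis using m by auto
qed

lemma bihom_add: "bihom p q X \<Longrightarrow> bihom p q Y \<Longrightarrow> bihom p q (X + Y)"
  unfolding bihom_def
proof
  fix a assume "\<forall>a\<in>ks X. xdeg a = p \<and> udeg a = q" "\<forall>a\<in>ks Y. xdeg a = p \<and> udeg a = q" "a \<in> ks (X + Y)"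
  moreover have "a \<in> ks X \<union> ks Y" using \<open>a \<in> ks (X + Y)\<close> by (rule subsetD[OF keys_add])
  ultimately show "xdeg a = p \<and> udeg a = q" by blast
qed
lemma bihom_minus: "bihom p q X \<Longrightarrow> bihom p q Y \<Longrightarrow> bihom p q (X - Y)"
  unfolding bihom_def
proof
  fix a assume "\<forall>a\<in>ks X. xdeg a = p \<and> udeg a = q" "\<forall>a\<in>ks Y. xdeg a = p \<and> udeg a = q" "a \<in> ks (X - Y)"
  moreover have "a \<in> ks X \<union> ks Y" using \<open>a \<in> ks (X - Y)\<close> by (rule subsetD[OF keys_diff])
  ultimately show "xdeg a = p \<and> udeg a = q" by blast
qed
lemma bihom_zero [simp]: "bihom p q 0"
  unfolding bihom_def by simp

lemma fischer_expand_left: "fischer X Y = (\<Sum>a\<in>ks X. cnj (lk X a) * fischer (Poly_Mapping.single a 1) Y)"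
  by (simp add: fischer_eq fischer_single mult.assoc)

lemma fischer_sum_sm_left: "fischer (\<Sum>j\<in>I. sm (d j) (g j)) X = (\<Sum>j\<in>I. cnj (d j) * fischer (g j) X)"
  by (simp add: fischer_sum_left fischer_sm_left)

lemma gram_schmidt:
  assumes "finite I"
  shows "\<exists>c. \<forall>i\<in>I. fischer (g i) (v - (\<Sum>j\<in>I. sm (c j) (g j))) = 0"
  using assms
proof (induction I arbitrary: v rule: finite_induct)
  case empty
  then show ?case by simp
next
  case (insert i I)
  obtain c where c: "\<forall>j\<in>I. fischer (g j) (v - (\<Sum>j\<in>I. sm (c j) (g j))) = 0" using insert.IH by blast
  obtain d where d: "\<forall>j\<in>I. fischer (g j) (g i - (\<Sum>j\<in>I. sm (d j) (g j))) = 0" using insert.IH by blast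
  define r where "r = v - (\<Sum>j\<in>I. sm (c j) (g j))"
  define zr where "zr = g i - (\<Sum>j\<in>I. sm (d j) (g j))"
  define k where "k = fischer zr r / fischer zr zr"
  define c' where "c' = (\<lambda>j. if j = i then k else c j - k * d j)"
  have eq: "v - (\<Sum>j\<in>insert i I. sm (c' j) (g j)) = r - sm k zr"
  proof (rule poly_mapping_eqI)
    fix a
    have S1: "(\<Sum>j\<in>insert i I. c' j * lk (g j) a) = k * lk (g i) a + (\<Sum>j\<in>I. (c j - k * d j) * lk (g j) a)"
      using insert.hyps by (simp add: c'_def) (intro sum.cong refl, auto)
    have S2: "(\<Sum>j\<in>I. (c j - k * d j) * lk (g j) a) = (\<Sum>j\<in>I. c j * lk (g j) a) - k * (\<Sum>j\<in>I. d j * lk (g j) a)"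
      by (simp add: algebra_simps sum_subtractf sum_distrib_left)
    have L: "lk (v - (\<Sum>j\<in>insert i I. sm (c' j) (g j))) a = lk v a - (\<Sum>j\<in>insert i I. c' j * lk (g j) a)"
      by (simp add: lookup_minus lookup_sum)
    have R: "lk (r - sm k zr) a = lk v a - (\<Sum>j\<in>I. c j * lk (g j) a) - k * (lk (g i) a - (\<Sum>j\<in>I. d j * lk (g j) a))"
      by (simp add: r_def zr_def lookup_minus lookup_sum)
    show "lk (v - (\<Sum>j\<in>insert i I. sm (c' j) (g j))) a = lk (r - sm k zr) a"
      unfolding L R S1 S2 by (simp add: algebra_simps)
  qed
  have o1: "fischer (g j) (r - sm k zr) = 0" if "j \<in> I" for j
    using c d that by (simp add: fischer_minus_right fischer_sm_right r_def zr_def)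
  have o2: "fischer zr (r - sm k zr) = 0"
  proof (cases "fischer zr zr = 0")
    case True
    then have "zr = 0" by (rule fischer_self_zero)
    then show ?thesis by simp
  next
    case False
    then show ?thesis by (simp add: fischer_minus_right fischer_sm_right k_def)
  qed
  have gi: "g i = zr + (\<Sum>j\<in>I. sm (d j) (g j))" by (simp add: zr_def)
  have o3: "fischer (g i) (r - sm k zr) = 0"
    by (subst gi) (simp add: fischer_add_left fischer_sum_sm_left o1 o2)
  show ?case
    by (rule exI[of _ c']) (use o1 o3 eq in auto)
qed



lemma finite_bounded_monos: "finite {b :: ('a::finite) \<Rightarrow>\<^sub>0 nat. \<forall>v. lk b v \<le> N}"
proof -
  let ?S = "{b :: 'a \<Rightarrow>\<^sub>0 nat. \<forall>v. lk b v \<le> N}"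
  have "lk ` ?S \<subseteq> Pi\<^sub>E UNIV (\<lambda>_. {..N})" by (auto simp: PiE_UNIV_domain)
  moreover have "finite (Pi\<^sub>E (UNIV::'a set) (\<lambda>_. {..N}))" by (rule finite_PiE) auto
  ultimately have "finite (lk ` ?S)" by (rule finite_subset)
  moreover have "inj_on lk ?S" by (rule inj_onI) (simp add: poly_mapping_eqI)
  ultimately show ?thesis by (rule finite_imageD)
qed

lemma lk_le_deg: "lk b v \<le> xdeg b + udeg (b::'n::finite mono)"
proof (cases v)
  case (Inl j)
  have "lk b (Inl j) \<le> xdeg b" unfolding xdeg_def by (rule member_le_sum) auto
  then show ?thesis using Inl by simp
next
  case (Inr j)
  have "lk b (Inr j) \<le> udeg b" unfolding udeg_def by (rule member_le_sum) auto
  then show ?thesis using Inr by simp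
qed

lemma finite_deg_monos: "finite {b :: 'n::finite mono. xdeg b + udeg b \<le> N}"
  by (rule finite_subset[OF _ finite_bounded_monos[of N]]) (auto intro: order_trans[OF lk_le_deg])

lemma keys_sum_sm_single:
  "a \<in> ks (\<Sum>b\<in>F. sm (c b) (Poly_Mapping.single b 1)) \<Longrightarrow> a \<in> F"
proof -
  assume "a \<in> ks (\<Sum>b\<in>F. sm (c b) (Poly_Mapping.single b 1))"
  then have "a \<in> (\<Union>b\<in>F. ks (sm (c b) (Poly_Mapping.single b (1::complex))))" by (rule subsetD[OF keys_sum])
  then obtain b where "b \<in> F" "a \<in> ks (sm (c b) (Poly_Mapping.single b (1::complex)))" by blast
  then show "a \<in> F" using keys_sm by fastforce
qed

lemma harm_from_orth_x:
  assumes "\<And>a. xdeg a + 2 = p \<Longrightarrow> udeg a = q \<Longrightarrow> fischer (normx2 * Poly_Mapping.single a 1) r = 0"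
    and "bihom p q r"
  shows "lap_x r = 0"
proof -
  let ?L = "lap_x r"
  have "\<And>a. a \<in> ks ?L \<Longrightarrow> fischer (Poly_Mapping.single a 1) ?L = 0"
  proof -
    fix a assume "a \<in> ks ?L"
    then obtain b where "b \<in> ks r" "xdeg b = xdeg a + 2" "udeg b = udeg a" using keys_lap_x by blast
    then have "xdeg a + 2 = p" "udeg a = q" using assms(2) unfolding bihom_def by auto
    then show "fischer (Poly_Mapping.single a 1) ?L = 0" using assms(1) by (simp add: fischer_normx2)
  qed
  then have "fischer ?L ?L = 0" by (simp add: fischer_expand_left[of ?L])
  then show ?thesis by (rule fischer_self_zero)
qed

lemma harm_from_orth_u:
  assumes "\<And>a. xdeg a = p \<Longrightarrow> udeg a + 2 = q \<Longrightarrow> fischer (normu2 * Poly_Mapping.single a 1) r = 0"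
    and "bihom p q r"
  shows "lap_u r = 0"
proof -
  let ?L = "lap_u r"
  have "\<And>a. a \<in> ks ?L \<Longrightarrow> fischer (Poly_Mapping.single a 1) ?L = 0"
  proof -
    fix a assume "a \<in> ks ?L"
    then obtain b where "b \<in> ks r" "xdeg b = xdeg a" "udeg b = udeg a + 2" using keys_lap_u by blast
    then have "xdeg a = p" "udeg a + 2 = q" using assms(2) unfolding bihom_def by auto
    then show "fischer (Poly_Mapping.single a 1) ?L = 0" using assms(1) by (simp add: fischer_normu2)
  qed
  then have "fischer ?L ?L = 0" by (simp add: fischer_expand_left[of ?L])
  then show ?thesis by (rule fischer_self_zero)
qed

lemma bihom_normx2: "\<forall>a\<in>ks R. xdeg a + 2 = p \<and> udeg a = q \<Longrightarrow> bihom p q (normx2 * R)"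
  unfolding bihom_def
proof
  fix a assume H: "\<forall>a\<in>ks R. xdeg a + 2 = p \<and> udeg a = q" and "a \<in> ks (normx2 * R)"
  then obtain b where "b \<in> ks R" "xdeg a = xdeg b + 2" "udeg a = udeg b" using keys_normx2 by blast
  then show "xdeg a = p \<and> udeg a = q" using H by auto
qed

lemma bihom_normu2: "\<forall>a\<in>ks R. xdeg a = p \<and> udeg a + 2 = q \<Longrightarrow> bihom p q (normu2 * R)"
  unfolding bihom_def
proof
  fix a assume H: "\<forall>a\<in>ks R. xdeg a = p \<and> udeg a + 2 = q" and "a \<in> ks (normu2 * R)"
  then obtain b where "b \<in> ks R" "xdeg a = xdeg b" "udeg a = udeg b + 2" using keys_normu2 by blast
  then show "xdeg a = p \<and> udeg a = q" using H by auto
qed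

lemma delta2: "(\<Sum>a\<le>A. \<Sum>b\<le>B. (normx2::'n::finite cpoly) ^ a * normu2 ^ b * (if a = 0 \<and> b = 0 then r else 0)) = r"
proof -
  have "(\<Sum>a\<le>A. \<Sum>b\<le>B. (normx2::'n cpoly) ^ a * normu2 ^ b * (if a = 0 \<and> b = 0 then r else 0))
      = (\<Sum>a\<le>A. \<Sum>b\<le>B. if a = 0 \<and> b = 0 then r else 0)"
    by (intro sum.cong refl) simp
  also have "\<dots> = (\<Sum>a\<le>A. if a = 0 then r else 0)"
    by (intro sum.cong refl) (simp add: sum.delta')
  also have "\<dots> = r" by (simp add: sum.delta')
  finally show ?thesis .
qed



lemma decomp_exists_aux:
  "p + q = n \<Longrightarrow> bihom p q (P::'n::finite cpoly) \<Longrightarrow> \<exists>Hf. decomp p q P Hf"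
proof (induction n arbitrary: p q P rule: less_induct)
  case (less n p q P)
  define F1 where "F1 = {b::'n mono. xdeg b + 2 = p \<and> udeg b = q}"
  define F2 where "F2 = {b::'n mono. xdeg b = p \<and> udeg b + 2 = q}"
  define I where "I = Inl ` F1 \<union> Inr ` F2"
  define g :: "'n mono + 'n mono \<Rightarrow> 'n cpoly" where
    "g = case_sum (\<lambda>b. normx2 * Poly_Mapping.single b 1) (\<lambda>b. normu2 * Poly_Mapping.single b 1)"
  have fF1: "finite F1" by (rule finite_subset[OF _ finite_deg_monos[of "p + q"]]) (auto simp: F1_def)
  have fF2: "finite F2" by (rule finite_subset[OF _ finite_deg_monos[of "p + q"]]) (auto simp: F2_def)
  have fin: "finite I" using fF1 fF2 by (simp add: I_def)
  obtain c where c: "\<forall>i\<in>I. fischer (g i) (P - (\<Sum>j\<in>I. sm (c j) (g j))) = 0"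
    using gram_schmidt[OF fin] by blast
  define R1 where "R1 = (\<Sum>b\<in>F1. sm (c (Inl b)) (Poly_Mapping.single b 1))"
  define R2 where "R2 = (\<Sum>b\<in>F2. sm (c (Inr b)) (Poly_Mapping.single b 1))"
  have smn: "sm k (N * X) = N * sm k X" for k N X by (simp add: sm_def mult_ac)
  have split: "(\<Sum>j\<in>I. sm (c j) (g j)) = normx2 * R1 + normu2 * R2"
  proof -
    have "(\<Sum>j\<in>I. sm (c j) (g j)) = (\<Sum>j\<in>Inl ` F1. sm (c j) (g j)) + (\<Sum>j\<in>Inr ` F2. sm (c j) (g j))"
      unfolding I_def by (rule sum.union_disjoint) (use fF1 fF2 in auto)
    also have "(\<Sum>j\<in>Inl ` F1. sm (c j) (g j)) = normx2 * R1"
      by (simp add: sum.reindex R1_def g_def smn sum_distrib_left)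
    also have "(\<Sum>j\<in>Inr ` F2. sm (c j) (g j)) = normu2 * R2"
      by (simp add: sum.reindex R2_def g_def smn sum_distrib_left)
    finally show ?thesis .
  qed
  define r where "r = P - normx2 * R1 - normu2 * R2"
  have Pr: "P = r + normx2 * R1 + normu2 * R2" by (simp add: r_def)
  have r_orth: "\<And>i. i \<in> I \<Longrightarrow> fischer (g i) r = 0"
    using c unfolding split r_def by (simp add: diff_diff_eq)
  have R1k: "\<forall>a\<in>ks R1. xdeg a + 2 = p \<and> udeg a = q"
  proof
    fix a assume "a \<in> ks R1"
    then have "a \<in> F1" unfolding R1_def by (rule keys_sum_sm_single)
    then show "xdeg a + 2 = p \<and> udeg a = q" by (simp add: F1_def)
  qed
  have R2k: "\<forall>a\<in>ks R2. xdeg a = p \<and> udeg a + 2 = q"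
  proof
    fix a assume "a \<in> ks R2"
    then have "a \<in> F2" unfolding R2_def by (rule keys_sum_sm_single)
    then show "xdeg a = p \<and> udeg a + 2 = q" by (simp add: F2_def)
  qed
  have br: "bihom p q r"
    unfolding r_def
    by (intro bihom_minus less.prems(2) bihom_normx2 bihom_normu2 R1k R2k)
  have lx: "lap_x r = 0"
  proof (rule harm_from_orth_x[OF _ br])
    fix a :: "'n mono" assume "xdeg a + 2 = p" "udeg a = q"
    then have "Inl a \<in> I" by (simp add: I_def F1_def)
    then show "fischer (normx2 * Poly_Mapping.single a 1) r = 0" using r_orth g_def by fastforce
  qed
  have lu: "lap_u r = 0"
  proof (rule harm_from_orth_u[OF _ br])
    fix a :: "'n mono" assume "xdeg a = p" "udeg a + 2 = q"
    then have "Inr a \<in> I" by (simp add: I_def F2_def)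
    then show "fischer (normu2 * Poly_Mapping.single a 1) r = 0" using r_orth g_def by fastforce
  qed
  have hr: "harmonic2 r" using lx lu by (simp add: harmonic2_def)
  obtain G where G: "\<forall>a\<le>p div 2. \<forall>b\<le>q div 2. 1 \<le> a \<longrightarrow> bihom (p - 2*a) (q - 2*b) (G (a-1) b) \<and> harmonic2 (G (a-1) b)"
    and GR: "normx2 * R1 = (\<Sum>a\<le>p div 2. \<Sum>b\<le>q div 2. normx2 ^ a * normu2 ^ b * (if 1 \<le> a then G (a-1) b else 0))"
  proof (cases "2 \<le> p")
    case False
    then have "F1 = {}" by (auto simp: F1_def)
    then have "R1 = 0" by (simp add: R1_def)
    moreover have "p div 2 = 0" using False by simp
    ultimately show ?thesis by (intro that[of "\<lambda>_ _. 0"]) auto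
  next
    case True
    have bR1: "bihom (p - 2) q R1" using R1k True unfolding bihom_def by auto
    obtain H1 where d1: "decomp (p - 2) q R1 H1"
      using less.IH[of "p - 2 + q" "p - 2" q R1] bR1 True less.prems(1) by auto
    define m where "m = (p - 2) div 2"
    have pm: "p div 2 = Suc m" using True unfolding m_def by presburger
    show ?thesis
    proof (rule that[of H1])
      show "\<forall>a\<le>p div 2. \<forall>b\<le>q div 2. 1 \<le> a \<longrightarrow> bihom (p - 2*a) (q - 2*b) (H1 (a-1) b) \<and> harmonic2 (H1 (a-1) b)"
      proof (intro allI impI)
        fix a b assume a: "a \<le> p div 2" and b: "b \<le> q div 2" and a1: "1 \<le> a"
        have "a - 1 \<le> m" using a a1 pm by linarith
        then have "a - 1 \<le> (p - 2) div 2" by (simp add: m_def)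
        then have "bihom (p - 2 - 2*(a-1)) (q - 2*b) (H1 (a-1) b) \<and> harmonic2 (H1 (a-1) b)"
          using d1 b unfolding decomp_def by blast
        moreover have "p - 2 - 2*(a-1) = p - 2*a" using a1 True by simp
        ultimately show "bihom (p - 2*a) (q - 2*b) (H1 (a-1) b) \<and> harmonic2 (H1 (a-1) b)" by simp
      qed
      have R1e: "R1 = (\<Sum>a\<le>m. \<Sum>b\<le>q div 2. normx2 ^ a * normu2 ^ b * H1 a b)"
        using d1 unfolding decomp_def m_def by blast
      have "normx2 * R1 = (\<Sum>a\<le>m. \<Sum>b\<le>q div 2. normx2 ^ Suc a * normu2 ^ b * H1 a b)"
        unfolding R1e by (simp add: sum_distrib_left mult.assoc)
      also have "\<dots> = (\<Sum>a\<le>Suc m. \<Sum>b\<le>q div 2. normx2 ^ a * normu2 ^ b * (if 1 \<le> a then H1 (a-1) b else 0))"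
        by (subst sum.atMost_Suc_shift) simp
      finally show "normx2 * R1 = (\<Sum>a\<le>p div 2. \<Sum>b\<le>q div 2. normx2 ^ a * normu2 ^ b * (if 1 \<le> a then H1 (a-1) b else 0))"
        unfolding pm .
    qed
  qed
  obtain K where K: "\<forall>a\<le>p div 2. \<forall>b\<le>q div 2. 1 \<le> b \<longrightarrow> bihom (p - 2*a) (q - 2*b) (K a (b-1)) \<and> harmonic2 (K a (b-1))"
    and KR: "normu2 * R2 = (\<Sum>a\<le>p div 2. \<Sum>b\<le>q div 2. normx2 ^ a * normu2 ^ b * (if 1 \<le> b then K a (b-1) else 0))"
  proof (cases "2 \<le> q")
    case False
    then have "F2 = {}" by (auto simp: F2_def)
    then have "R2 = 0" by (simp add: R2_def)
    moreover have "q div 2 = 0" using False by simp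
    ultimately show ?thesis by (intro that[of "\<lambda>_ _. 0"]) auto
  next
    case True
    have bR2: "bihom p (q - 2) R2" using R2k True unfolding bihom_def by auto
    obtain H2 where d2: "decomp p (q - 2) R2 H2"
      using less.IH[of "p + (q - 2)" p "q - 2" R2] bR2 True less.prems(1) by auto
    define m where "m = (q - 2) div 2"
    have qm: "q div 2 = Suc m" using True unfolding m_def by presburger
    show ?thesis
    proof (rule that[of H2])
      show "\<forall>a\<le>p div 2. \<forall>b\<le>q div 2. 1 \<le> b \<longrightarrow> bihom (p - 2*a) (q - 2*b) (H2 a (b-1)) \<and> harmonic2 (H2 a (b-1))"
      proof (intro allI impI)
        fix a b assume a: "a \<le> p div 2" and b: "b \<le> q div 2" and b1: "1 \<le> b"
        have "b - 1 \<le> m" using b b1 qm by linarith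
        then have "b - 1 \<le> (q - 2) div 2" by (simp add: m_def)
        then have "bihom (p - 2*a) (q - 2 - 2*(b-1)) (H2 a (b-1)) \<and> harmonic2 (H2 a (b-1))"
          using d2 a unfolding decomp_def by blast
        moreover have "q - 2 - 2*(b-1) = q - 2*b" using b1 True by simp
        ultimately show "bihom (p - 2*a) (q - 2*b) (H2 a (b-1)) \<and> harmonic2 (H2 a (b-1))" by simp
      qed
      have R2e: "R2 = (\<Sum>a\<le>p div 2. \<Sum>b\<le>m. normx2 ^ a * normu2 ^ b * H2 a b)"
        using d2 unfolding decomp_def m_def by blast
      have "normu2 * R2 = (\<Sum>a\<le>p div 2. \<Sum>b\<le>m. normx2 ^ a * normu2 ^ Suc b * H2 a b)"
        unfolding R2e by (simp add: sum_distrib_left mult_ac)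
      also have "\<dots> = (\<Sum>a\<le>p div 2. \<Sum>b\<le>Suc m. normx2 ^ a * normu2 ^ b * (if 1 \<le> b then H2 a (b-1) else 0))"
        by (rule sum.cong[OF refl]) (subst sum.atMost_Suc_shift, simp)
      finally show "normu2 * R2 = (\<Sum>a\<le>p div 2. \<Sum>b\<le>q div 2. normx2 ^ a * normu2 ^ b * (if 1 \<le> b then H2 a (b-1) else 0))"
        unfolding qm .
    qed
  qed
  define Hf where "Hf = (\<lambda>a b. (if a = 0 \<and> b = 0 then r else 0) + (if 1 \<le> a then G (a-1) b else 0)
                              + (if 1 \<le> b then K a (b-1) else 0))"
  have "decomp p q P Hf"
    unfolding decomp_def
  proof (intro conjI allI impI)
    fix a b assume a: "a \<le> p div 2" and b: "b \<le> q div 2"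
    have t1: "bihom (p - 2*a) (q - 2*b) (if a = 0 \<and> b = 0 then r else 0) \<and> harmonic2 (if a = 0 \<and> b = 0 then r else 0)"
      using br hr by auto
    have t2: "bihom (p - 2*a) (q - 2*b) (if 1 \<le> a then G (a-1) b else 0) \<and> harmonic2 (if 1 \<le> a then G (a-1) b else 0)"
      using G a b by auto
    have t3: "bihom (p - 2*a) (q - 2*b) (if 1 \<le> b then K a (b-1) else 0) \<and> harmonic2 (if 1 \<le> b then K a (b-1) else 0)"
      using K a b by auto
    show "bihom (p - 2*a) (q - 2*b) (Hf a b)" unfolding Hf_def
      using t1 t2 t3 by (intro bihom_add) auto
    show "harmonic2 (Hf a b)" unfolding Hf_def
      using t1 t2 t3 by (intro harmonic2_add) auto
  next
    have "(\<Sum>a\<le>p div 2. \<Sum>b\<le>q div 2. normx2 ^ a * normu2 ^ b * Hf a b)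
      = (\<Sum>a\<le>p div 2. \<Sum>b\<le>q div 2. normx2 ^ a * normu2 ^ b * (if a = 0 \<and> b = 0 then r else 0))
      + (\<Sum>a\<le>p div 2. \<Sum>b\<le>q div 2. normx2 ^ a * normu2 ^ b * (if 1 \<le> a then G (a-1) b else 0))
      + (\<Sum>a\<le>p div 2. \<Sum>b\<le>q div 2. normx2 ^ a * normu2 ^ b * (if 1 \<le> b then K a (b-1) else 0))"
      unfolding Hf_def by (simp only: distrib_left sum.distrib)
    also have "\<dots> = r + normx2 * R1 + normu2 * R2"
      by (simp only: delta2 GR KR)
    finally show "P = (\<Sum>a\<le>p div 2. \<Sum>b\<le>q div 2. normx2 ^ a * normu2 ^ b * Hf a b)"
      using Pr by simp
  qed
  then show ?case by blast
qed

lemma decomp_exists: "bihom p q P \<Longrightarrow> \<exists>Hf. decomp p q P Hf"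
  using decomp_exists_aux by blast

lemma pis_hom_eq:
  assumes "decomp p q P Hf"
  shows "pis_hom p q P = Hf 0 0"
  unfolding pis_hom_def
proof (rule the_equality)
  show "\<exists>Hf'. (\<forall>a\<le>p div 2. \<forall>b\<le>q div 2. bihom (p - 2*a) (q - 2*b) (Hf' a b) \<and> harmonic2 (Hf' a b)) \<and>
      P = (\<Sum>a\<le>p div 2. \<Sum>b\<le>q div 2. normx2 ^ a * normu2 ^ b * Hf' a b) \<and> Hf 0 0 = Hf' 0 0"
    using assms unfolding decomp_def by blast
next
  fix H
  assume "\<exists>Hf'. (\<forall>a\<le>p div 2. \<forall>b\<le>q div 2. bihom (p - 2*a) (q - 2*b) (Hf' a b) \<and> harmonic2 (Hf' a b)) \<and>
      P = (\<Sum>a\<le>p div 2. \<Sum>b\<le>q div 2. normx2 ^ a * normu2 ^ b * Hf' a b) \<and> H = Hf' 0 0"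
  then obtain Hf' where d': "decomp p q P Hf'" and H: "H = Hf' 0 0" unfolding decomp_def by blast
  have h1: "harmonic2 (Hf 0 0)" using assms unfolding decomp_def by auto
  have h2: "harmonic2 (Hf' 0 0)" using d' unfolding decomp_def by auto
  let ?D = "Hf' 0 0 - Hf 0 0"
  have hD: "harmonic2 ?D" using harmonic2_minus[OF h2 h1] .
  have P1: "P = (\<Sum>a\<le>p div 2. \<Sum>b\<le>q div 2. normx2 ^ a * normu2 ^ b * Hf a b)"
    using assms unfolding decomp_def by blast
  have P2: "P = (\<Sum>a\<le>p div 2. \<Sum>b\<le>q div 2. normx2 ^ a * normu2 ^ b * Hf' a b)"
    using d' unfolding decomp_def by blast
  have e1: "fischer (Hf 0 0) ?D = fischer P ?D"
    by (subst P1) (rule decomp_fischer[OF hD, symmetric])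
  have e2: "fischer (Hf' 0 0) ?D = fischer P ?D"
    by (subst P2) (rule decomp_fischer[OF hD, symmetric])
  have "fischer ?D ?D = 0" by (simp add: fischer_minus_left e1 e2)
  then have "?D = 0" by (rule fischer_self_zero)
  then show "H = Hf 0 0" using H by simp
qed

lemma lookup_bicomp: "lk (bicomp p q R) a = (if xdeg a = p \<and> udeg a = q then lk R a else 0)"
  by (auto simp: bicomp_def lookup_sum lookup_single when_def in_keys_iff)

lemma bihom_bicomp: "bihom p q (bicomp p q R)"
  unfolding bihom_def by (auto simp: in_keys_iff lookup_bicomp split: if_splits)

lemma bicomp_sum: "R = (\<Sum>(p,q)\<in>(\<lambda>\<alpha>. (xdeg \<alpha>, udeg \<alpha>)) ` ks R. bicomp p q R)"
proof (rule poly_mapping_eqI)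
  fix a
  let ?I = "(\<lambda>\<alpha>. (xdeg \<alpha>, udeg \<alpha>)) ` ks R"
  have "lk (\<Sum>(p,q)\<in>?I. bicomp p q R) a = (\<Sum>x\<in>?I. if (xdeg a, udeg a) = x then lk R a else 0)"
    unfolding lookup_sum by (intro sum.cong refl) (auto simp: lookup_bicomp split: if_splits)
  also have "\<dots> = (if (xdeg a, udeg a) \<in> ?I then lk R a else 0)"
    by (simp add: sum.delta')
  also have "\<dots> = lk R a"
    by (cases "a \<in> ks R") (auto simp: in_keys_iff)
  finally show "lk R a = lk (\<Sum>(p,q)\<in>?I. bicomp p q R) a" by simp
qed

lemma fischer_pis:
  assumes "harmonic2 Q"
  shows "fischer (pis R) Q = fischer R Q"
proof -
  let ?I = "(\<lambda>\<alpha>. (xdeg \<alpha>, udeg \<alpha>)) ` ks R"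
  have "fischer (pis R) Q = (\<Sum>x\<in>?I. fischer (case x of (p,q) \<Rightarrow> pis_hom p q (bicomp p q R)) Q)"
    unfolding pis_def by (simp add: fischer_sum_left)
  also have "\<dots> = (\<Sum>x\<in>?I. fischer (case x of (p,q) \<Rightarrow> bicomp p q R) Q)"
  proof (intro sum.cong refl)
    fix x assume "x \<in> ?I"
    obtain p q where x: "x = (p,q)" by (cases x)
    obtain Hf where d: "decomp p q (bicomp p q R) Hf" using decomp_exists[OF bihom_bicomp] by blast
    have B: "bicomp p q R = (\<Sum>a\<le>p div 2. \<Sum>b\<le>q div 2. normx2 ^ a * normu2 ^ b * Hf a b)"
      using d unfolding decomp_def by blast
    have "fischer (pis_hom p q (bicomp p q R)) Q = fischer (bicomp p q R) Q"
      unfolding pis_hom_eq[OF d] by (subst B) (rule decomp_fischer[OF assms, symmetric])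
    then show "fischer (case x of (p,q) \<Rightarrow> pis_hom p q (bicomp p q R)) Q = fischer (case x of (p,q) \<Rightarrow> bicomp p q R) Q"
      using x by simp
  qed
  also have "\<dots> = fischer (\<Sum>(p,q)\<in>?I. bicomp p q R) Q"
    by (simp add: fischer_sum_left)
  also have "\<dots> = fischer R Q" using bicomp_sum[of R] by simp
  finally show ?thesis .
qed

lemma fischer_pis_right:
  assumes "harmonic2 P"
  shows "fischer P (pis R) = fischer P R"
proof -
  have "fischer P (pis R) = cnj (fischer (pis R) P)" by (rule fischer_cnj)
  also have "\<dots> = cnj (fischer R P)" by (simp only: fischer_pis[OF assms])
  also have "\<dots> = fischer P R" by (rule fischer_cnj[symmetric])
  finally show ?thesis .
qed

lemma part_CA:
  assumes "harmonic2 P" "harmonic2 Q"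
  shows "fischer (C_op P) Q = fischer P (A_op Q)"
proof -
  have "fischer (C_op P) Q = fischer ((\<Sum>j\<in>UNIV. var (Inr j) * var (Inl j)) * P) Q"
    unfolding C_op_def by (rule fischer_pis[OF assms(2)])
  also have "(\<Sum>j\<in>UNIV. var (Inr j) * var (Inl j)) * P = (\<Sum>j\<in>UNIV. var (Inl j) * (var (Inr j) * P))"
    unfolding sum_distrib_right by (simp add: mult_ac)
  also have "fischer (\<Sum>j\<in>UNIV. var (Inl j) * (var (Inr j) * P)) Q = (\<Sum>j\<in>UNIV. fischer (var (Inl j) * (var (Inr j) * P)) Q)"
    by (simp add: fischer_sum_left)
  also have "\<dots> = (\<Sum>j\<in>UNIV. fischer P (pder (Inr j) (pder (Inl j) Q)))"
    by (simp add: fischer_var_adj)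
  also have "\<dots> = fischer P (A_op Q)"
    unfolding A_op_def fischer_pis_right[OF assms(1)] fischer_sum_right ..
  finally show ?thesis .
qed

lemma part_SuSx:
  assumes "harmonic2 P" "harmonic2 Q"
  shows "fischer (S_u P) Q = fischer P (S_x Q)"
proof -
  have "fischer (S_u P) Q = fischer (\<Sum>j\<in>UNIV. var (Inr j) * pder (Inl j) P) Q"
    unfolding S_u_def by (rule fischer_pis[OF assms(2)])
  also have "\<dots> = (\<Sum>j\<in>UNIV. fischer (pder (Inl j) P) (pder (Inr j) Q))"
    by (simp add: fischer_sum_left fischer_var_adj)
  also have "\<dots> = (\<Sum>j\<in>UNIV. fischer P (var (Inl j) * pder (Inr j) Q))"
  proof (intro sum.cong refl)
    fix j
    show "fischer (pder (Inl j) P) (pder (Inr j) Q) = fischer P (var (Inl j) * pder (Inr j) Q)"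
    proof -
      have "fischer P (var (Inl j) * pder (Inr j) Q) = cnj (fischer (var (Inl j) * pder (Inr j) Q) P)" by (rule fischer_cnj)
      also have "\<dots> = cnj (fischer (pder (Inr j) Q) (pder (Inl j) P))" by (simp only: fischer_var_adj)
      also have "\<dots> = fischer (pder (Inl j) P) (pder (Inr j) Q)" by (rule fischer_cnj[symmetric])
      finally show ?thesis by (rule sym)
    qed
  qed
  also have "\<dots> = fischer P (S_x Q)"
    unfolding S_x_def fischer_pis_right[OF assms(1)] fischer_sum_right ..
  finally show ?thesis .
qed

theorem proposition6p1:
  fixes P Q :: "'n::finite cpoly"
  assumes "card (UNIV :: 'n set) > 4"
    and "harmonic2 P" and "harmonic2 Q"
  shows "fischer (C_op P) Q = fischer P (A_op Q) \<and>
         fischer (A_op P) Q = fischer P (C_op Q) \<and>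
         fischer (S_u P) Q = fischer P (S_x Q) \<and>
         fischer (S_x P) Q = fischer P (S_u Q)"
proof (intro conjI)
  show "fischer (C_op P) Q = fischer P (A_op Q)" by (rule part_CA[OF assms(2,3)])
  show "fischer (S_u P) Q = fischer P (S_x Q)" by (rule part_SuSx[OF assms(2,3)])
  have "fischer (A_op P) Q = cnj (fischer Q (A_op P))" by (rule fischer_cnj)
  also have "\<dots> = cnj (fischer (C_op Q) P)" by (simp only: part_CA[OF assms(3,2)])
  also have "\<dots> = fischer P (C_op Q)" by (rule fischer_cnj[symmetric])
  finally show "fischer (A_op P) Q = fischer P (C_op Q)" .
  have "fischer (S_x P) Q = cnj (fischer Q (S_x P))" by (rule fischer_cnj)
  also have "\<dots> = cnj (fischer (S_u Q) P)" by (simp only: part_SuSx[OF assms(3,2)])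
  also have "\<dots> = fischer P (S_u Q)" by (rule fischer_cnj[symmetric])
  finally show "fischer (S_x P) Q = fischer P (S_u Q)" .
qed

end
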